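(* For every $n\ge0$, the localization $(\underline n\downarrow\mathbf{Fin})[\mathcal I^{-1}]$, obtained from the coslice category $(\underline n\downarrow\mathbf{Fin})$ by formally inverting all morphisms whose underlying map is injective, is a thin category.
   Context: $\mathbf{Fin}$ is the category with objects $\underline k=\{1,\dots,k\}$ for $k\ge0$ and morphisms all functions. $\mathcal I$ denotes the injective maps (inverting the injective order-preserving maps together with the isomorphisms inverts all injective maps). Objects of $(\underline n\downarrow\mathbf{Fin})$ are functions $\underline n\to\underline k$, morphisms are functions $\underline k\to\underline k'$ making the triangle commute. A category is thin if any two parallel morphisms are equal. *)

theory Defs
  imports "HOL-Library.FuncSet"
begin

text \<open>Finite ordinals are modelled 0-based: the set {..<k} stands for {1,...,k}.
  An object of the coslice category (n | Fin) is a pair (k, f) with f : {..<n} -> {..<k}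
  (extensional, i.e. undefined outside {..<n}).\<close>

type_synonym cobj = "nat \<times> (nat \<Rightarrow> nat)"

definition cs_obj :: "nat \<Rightarrow> cobj \<Rightarrow> bool" where
  "cs_obj n a \<longleftrightarrow> snd a \<in> {..<n} \<rightarrow>\<^sub>E {..<fst a}"

definition cs_mor :: "nat \<Rightarrow> cobj \<Rightarrow> (nat \<Rightarrow> nat) \<Rightarrow> cobj \<Rightarrow> bool" where
  "cs_mor n a g b \<longleftrightarrow> cs_obj n a \<and> cs_obj n b \<and> g \<in> {..<fst a} \<rightarrow>\<^sub>E {..<fst b}
     \<and> (\<forall>i<n. g (snd a i) = snd b i)"

definition cs_id :: "cobj \<Rightarrow> (nat \<Rightarrow> nat)" where
  "cs_id a = restrict (\<lambda>x. x) {..<fst a}"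

definition cs_comp :: "cobj \<Rightarrow> (nat \<Rightarrow> nat) \<Rightarrow> (nat \<Rightarrow> nat) \<Rightarrow> (nat \<Rightarrow> nat)" where
  "cs_comp a h g = compose {..<fst a} h g"

text \<open>Generating arrows of the localization: Fwd a g b is the morphism g : a -> b;
  Bwd b g a is the formal inverse (an arrow b -> a) of an injective morphism g : a -> b.\<close>
datatype edge = Fwd cobj "nat \<Rightarrow> nat" cobj | Bwd cobj "nat \<Rightarrow> nat" cobj

fun edge_ok :: "nat \<Rightarrow> edge \<Rightarrow> bool" where
  "edge_ok n (Fwd a g b) \<longleftrightarrow> cs_mor n a g b"
| "edge_ok n (Bwd b g a) \<longleftrightarrow> cs_mor n a g b \<and> inj_on g {..<fst a}"

fun edge_src :: "edge \<Rightarrow> cobj" where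
  "edge_src (Fwd a g b) = a" | "edge_src (Bwd b g a) = b"

fun edge_tgt :: "edge \<Rightarrow> cobj" where
  "edge_tgt (Fwd a g b) = b" | "edge_tgt (Bwd b g a) = a"

inductive zpath :: "nat \<Rightarrow> cobj \<Rightarrow> edge list \<Rightarrow> cobj \<Rightarrow> bool" for n where
  nil: "cs_obj n a \<Longrightarrow> zpath n a [] a"
| cons: "edge_ok n e \<Longrightarrow> edge_src e = a \<Longrightarrow> zpath n (edge_tgt e) es b \<Longrightarrow> zpath n a (e # es) b"

inductive zrel :: "nat \<Rightarrow> cobj \<Rightarrow> edge list \<Rightarrow> edge list \<Rightarrow> cobj \<Rightarrow> bool" for n where
  comp: "cs_mor n a g b \<Longrightarrow> cs_mor n b h c \<Longrightarrow>
           zrel n a [Fwd a g b, Fwd b h c] [Fwd a (cs_comp a h g) c] c"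
| ident: "cs_obj n a \<Longrightarrow> zrel n a [Fwd a (cs_id a) a] [] a"
| inv_left: "cs_mor n a g b \<Longrightarrow> inj_on g {..<fst a} \<Longrightarrow>
           zrel n a [Fwd a g b, Bwd b g a] [] a"
| inv_right: "cs_mor n a g b \<Longrightarrow> inj_on g {..<fst a} \<Longrightarrow>
           zrel n b [Bwd b g a, Fwd a g b] [] b"

inductive zeq :: "nat \<Rightarrow> cobj \<Rightarrow> edge list \<Rightarrow> edge list \<Rightarrow> cobj \<Rightarrow> bool" for n where
  refl: "zpath n a xs b \<Longrightarrow> zeq n a xs xs b"
| step: "zpath n a' us a \<Longrightarrow> zrel n a xs ys b \<Longrightarrow> zpath n b vs b' \<Longrightarrow>
           zeq n a' (us @ xs @ vs) (us @ ys @ vs) b'"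
| sym: "zeq n a xs ys b \<Longrightarrow> zeq n a ys xs b"
| trans: "zeq n a xs ys b \<Longrightarrow> zeq n a ys zs b \<Longrightarrow> zeq n a xs zs b"

definition localization_thin :: "nat \<Rightarrow> bool" where
  "localization_thin n \<longleftrightarrow>
     (\<forall>a b xs ys. zpath n a xs b \<longrightarrow> zpath n a ys b \<longrightarrow> zeq n a xs ys b)"

end

theory Submission
  imports Defs
begin

definition img :: "nat \<Rightarrow> cobj \<Rightarrow> nat set" where "img n a = snd a ` {..<n}"
definition mm :: "nat \<Rightarrow> cobj \<Rightarrow> nat" where "mm n a = card (img n a)"
definition iota :: "nat \<Rightarrow> cobj \<Rightarrow> nat \<Rightarrow> nat" where
  "iota n a = restrict (SOME \<phi>. bij_betw \<phi> {..<mm n a} (img n a)) {..<mm n a}"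
definition fp :: "nat \<Rightarrow> cobj \<Rightarrow> nat \<Rightarrow> nat" where
  "fp n a = restrict (\<lambda>i. inv_into {..<mm n a} (iota n a) (snd a i)) {..<n}"
definition sob :: "nat \<Rightarrow> cobj \<Rightarrow> cobj" where "sob n a = (mm n a, fp n a)"
definition hh :: "nat \<Rightarrow> cobj \<Rightarrow> cobj \<Rightarrow> nat \<Rightarrow> nat" where
  "hh n a b = restrict (\<lambda>j. fp n b (SOME i. i<n \<and> fp n a i = j)) {..<mm n a}"
definition NF :: "nat \<Rightarrow> cobj \<Rightarrow> cobj \<Rightarrow> edge list" where
  "NF n a b = [Bwd a (iota n a) (sob n a), Fwd (sob n a) (hh n a b) (sob n b), Fwd (sob n b) (iota n b) b]"
definition fle :: "nat \<Rightarrow> cobj \<Rightarrow> cobj \<Rightarrow> bool" where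
  "fle n a b \<longleftrightarrow> (\<forall>i<n. \<forall>j<n. snd a i = snd a j \<longrightarrow> snd b i = snd b j)"

lemma iota_bij: "bij_betw (iota n a) {..<mm n a} (img n a)"
proof -
  have "\<exists>\<phi>. bij_betw \<phi> {..<mm n a} (img n a)"
    using ex_bij_betw_nat_finite[of "img n a"] by (auto simp: mm_def atLeast0LessThan img_def)
  hence "bij_betw (SOME \<phi>. bij_betw \<phi> {..<mm n a} (img n a)) {..<mm n a} (img n a)" by (rule someI_ex)
  thus ?thesis unfolding iota_def by (subst bij_betw_cong[where g="SOME \<phi>. bij_betw \<phi> {..<mm n a} (img n a)"]) auto
qed

lemma iota_ext: "iota n a \<in> extensional {..<mm n a}"
  by (simp add: iota_def)

lemma fp_props:
  assumes "i < n"
  shows "fp n a i < mm n a" "iota n a (fp n a i) = snd a i"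
proof -
  have b: "iota n a ` {..<mm n a} = img n a" "inj_on (iota n a) {..<mm n a}"
    using iota_bij[of n a] by (auto simp: bij_betw_def)
  have "snd a i \<in> iota n a ` {..<mm n a}" using b assms by (auto simp: img_def)
  thus "fp n a i < mm n a" "iota n a (fp n a i) = snd a i"
    using assms b(2) by (auto simp: fp_def f_inv_into_f)
qed

lemma fp_surj:
  assumes "j < mm n a" shows "\<exists>i<n. fp n a i = j"
proof -
  have b: "iota n a ` {..<mm n a} = img n a" "inj_on (iota n a) {..<mm n a}"
    using iota_bij[of n a] by (auto simp: bij_betw_def)
  have "iota n a j \<in> img n a" using b assms by auto
  then obtain i where i: "i < n" "snd a i = iota n a j" by (auto simp: img_def)
  hence "fp n a i = j" using b assms by (simp add: fp_def inv_into_f_f)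
  thus ?thesis using i by blast
qed

lemma fp_eq_iff:
  assumes "i < n" "j < n" shows "fp n a i = fp n a j \<longleftrightarrow> snd a i = snd a j"
proof
  assume "fp n a i = fp n a j"
  hence "iota n a (fp n a i) = iota n a (fp n a j)" by simp
  thus "snd a i = snd a j" using fp_props assms by simp
next
  assume "snd a i = snd a j"
  thus "fp n a i = fp n a j" using assms by (simp add: fp_def)
qed

lemma fp_ext: "fp n a \<in> extensional {..<n}" by (simp add: fp_def)

lemma ext_sob:
  assumes "F \<in> extensional {..<mm n a}" "G \<in> extensional {..<mm n a}"
    "\<And>i. i < n \<Longrightarrow> F (fp n a i) = G (fp n a i)"
  shows "F = G"
  apply (rule extensionalityI[OF assms(1,2)])
  using fp_surj assms(3) by (metis lessThan_iff)

lemma sob_obj: "cs_obj n (sob n a)"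
  unfolding cs_obj_def sob_def using fp_props fp_ext by (auto simp: PiE_iff)

lemma iota_mor:
  assumes "cs_obj n a" shows "cs_mor n (sob n a) (iota n a) a" "inj_on (iota n a) {..<fst (sob n a)}"
proof -
  have b: "iota n a ` {..<mm n a} = img n a" "inj_on (iota n a) {..<mm n a}"
    using iota_bij[of n a] by (auto simp: bij_betw_def)
  have "img n a \<subseteq> {..<fst a}" using assms by (auto simp: img_def cs_obj_def PiE_iff)
  thus "cs_mor n (sob n a) (iota n a) a"
    using b assms sob_obj[of n a] iota_ext[of n a] fp_props[of _ n a]
    by (auto simp: cs_mor_def sob_def PiE_iff)
  show "inj_on (iota n a) {..<fst (sob n a)}" using b by (simp add: sob_def)
qed

lemma hh_val:
  assumes "fle n a b" "i < n"
  shows "hh n a b (fp n a i) = fp n b i"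
proof -
  have ex: "\<exists>i'. i'<n \<and> fp n a i' = fp n a i" using assms(2) by blast
  define i' where "i' = (SOME i'. i'<n \<and> fp n a i' = fp n a i)"
  have i': "i' < n \<and> fp n a i' = fp n a i" unfolding i'_def by (rule someI_ex[OF ex])
  hence "snd a i' = snd a i" using fp_eq_iff[of i' n i a] assms(2) by blast
  hence "snd b i' = snd b i" using assms i' unfolding fle_def by blast
  hence "fp n b i' = fp n b i" using fp_eq_iff[of i' n i b] assms(2) i' by blast
  moreover have "hh n a b (fp n a i) = fp n b i'"
    unfolding hh_def i'_def using fp_props(1)[OF assms(2), of a] by simp
  ultimately show ?thesis by simp
qed

lemma hh_props:
  assumes "fle n a b"
  shows "hh n a b \<in> {..<mm n a} \<rightarrow>\<^sub>E {..<mm n b}" "\<And>i. i < n \<Longrightarrow> hh n a b (fp n a i) = fp n b i"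
proof -
  show "hh n a b (fp n a i) = fp n b i" if "i < n" for i using hh_val[OF assms that] .
  show "hh n a b \<in> {..<mm n a} \<rightarrow>\<^sub>E {..<mm n b}"
    unfolding PiE_iff
  proof (intro conjI ballI)
    fix j assume "j \<in> {..<mm n a}"
    hence ex: "\<exists>i. i<n \<and> fp n a i = j" using fp_surj by blast
    have "(SOME i. i < n \<and> fp n a i = j) < n" using someI_ex[OF ex] by blast
    hence "fp n b (SOME i. i < n \<and> fp n a i = j) < mm n b" by (rule fp_props(1))
    thus "hh n a b j \<in> {..<mm n b}" using \<open>j \<in> {..<mm n a}\<close> by (simp add: hh_def)
  next
    show "hh n a b \<in> extensional {..<mm n a}" by (simp add: hh_def)
  qed
qed

lemma hh_mor:
  assumes "fle n a b" shows "cs_mor n (sob n a) (hh n a b) (sob n b)"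
  unfolding cs_mor_def using hh_props[OF assms] sob_obj[of n a] sob_obj[of n b] by (simp add: sob_def)

lemma zpath_Nil_iff: "zpath n a [] b \<longleftrightarrow> cs_obj n a \<and> b = a"
  by (auto intro: zpath.nil elim: zpath.cases)

lemma zpath_Cons_iff: "zpath n a (e # es) b \<longleftrightarrow> edge_ok n e \<and> edge_src e = a \<and> zpath n (edge_tgt e) es b"
  by (auto intro: zpath.cons elim: zpath.cases)

lemma zpath_app: "zpath n a xs b \<Longrightarrow> zpath n b ys c \<Longrightarrow> zpath n a (xs @ ys) c"
  by (induction rule: zpath.induct) (auto simp: zpath_Cons_iff)

lemma cs_comp_mor: "cs_mor n a g b \<Longrightarrow> cs_mor n b h c \<Longrightarrow> cs_mor n a (cs_comp a h g) c"
  by (auto simp: cs_mor_def cs_obj_def cs_comp_def compose_eq PiE_iff)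

lemma cs_id_mor: "cs_obj n a \<Longrightarrow> cs_mor n a (cs_id a) a"
  by (auto simp: cs_mor_def cs_id_def cs_obj_def PiE_iff)

lemma zrel_paths: "zrel n a xs ys b \<Longrightarrow> zpath n a xs b \<and> zpath n a ys b"
  by (induction rule: zrel.induct)
     (auto simp: zpath_Cons_iff zpath_Nil_iff cs_comp_mor cs_id_mor, auto simp: cs_mor_def)

lemma zeq_paths: "zeq n a xs ys b \<Longrightarrow> zpath n a xs b \<and> zpath n a ys b"
  by (induction rule: zeq.induct) (auto dest!: zrel_paths intro: zpath_app)

lemma zeq_ctx: "zeq n a xs ys b \<Longrightarrow> zpath n a' us a \<Longrightarrow> zpath n b vs b'
   \<Longrightarrow> zeq n a' (us @ xs @ vs) (us @ ys @ vs) b'"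
proof (induction arbitrary: a' us b' vs rule: zeq.induct)
  case (refl a xs b)
  then show ?case by (intro zeq.refl zpath_app) auto
next
  case (step a0 us0 a xs ys b vs0 b0)
  have "zeq n a' ((us @ us0) @ xs @ (vs0 @ vs)) ((us @ us0) @ ys @ (vs0 @ vs)) b'"
    by (rule zeq.step) (use step in \<open>auto intro: zpath_app\<close>)
  then show ?case by simp
next
  case (sym a xs ys b) then show ?case by (meson zeq.sym)
next
  case (trans a xs ys b zs) then show ?case by (meson zeq.trans)
qed

lemma fle_path: "zpath n a xs b \<Longrightarrow> fle n a b \<and> cs_obj n a \<and> cs_obj n b"
proof (induction rule: zpath.induct)
  case (nil a) then show ?case by (simp add: fle_def)
next
  case (cons e a es b)
  show ?case
  proof (cases e)
    case (Fwd x g y)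
    have m: "cs_mor n x g y" and xa: "x = a" and ih: "fle n y b" "cs_obj n y" "cs_obj n b"
      using cons.hyps(1,2) cons.IH Fwd by simp_all
    have gs: "\<forall>i<n. g (snd x i) = snd y i" using m unfolding cs_mor_def by blast
    have "fle n x b" unfolding fle_def
    proof (intro allI impI)
      fix i j assume ij: "i < n" "j < n" "snd x i = snd x j"
      have "snd y i = g (snd x i)" using gs ij(1) by simp
      moreover have "snd y j = g (snd x j)" using gs ij(2) by simp
      ultimately have "snd y i = snd y j" using ij(3) by simp
      thus "snd b i = snd b j" using ih(1) ij unfolding fle_def by blast
    qed
    then show ?thesis using xa m ih unfolding cs_mor_def by simp
  next
    case (Bwd y g x)
    have m: "cs_mor n x g y" and inj: "inj_on g {..<fst x}" and ya: "y = a"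
      and ih: "fle n x b" "cs_obj n x" "cs_obj n b" using cons.hyps(1,2) cons.IH Bwd by simp_all
    have "fle n y b" unfolding fle_def
    proof (intro allI impI)
      fix i j assume ij: "i < n" "j < n" "snd y i = snd y j"
      have "g (snd x i) = g (snd x j)" using m ij unfolding cs_mor_def by simp
      moreover have "snd x i \<in> {..<fst x}" "snd x j \<in> {..<fst x}"
        using ih(2) ij unfolding cs_obj_def by auto
      ultimately have "snd x i = snd x j" by (rule inj_onD[OF inj])
      thus "snd b i = snd b j" using ih(1) ij unfolding fle_def by blast
    qed
    then show ?thesis using ya m ih unfolding cs_mor_def by simp
  qed
qed

lemma zeq_ts: "zeq n a xs ys b \<Longrightarrow> zeq n a ys' zs b \<Longrightarrow> ys = ys' \<Longrightarrow> zeq n a xs zs b"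
  using zeq.trans by blast

lemma fle_trans: "fle n a b \<Longrightarrow> fle n b c \<Longrightarrow> fle n a c"
  unfolding fle_def
proof (intro allI impI)
  fix i j assume 1: "\<forall>i<n. \<forall>j<n. snd a i = snd a j \<longrightarrow> snd b i = snd b j"
    and 2: "\<forall>i<n. \<forall>j<n. snd b i = snd b j \<longrightarrow> snd c i = snd c j"
    and ij: "i < n" "j < n" "snd a i = snd a j"
  have "snd b i = snd b j" using 1 ij by blast
  thus "snd c i = snd c j" using 2 ij by blast
qed

lemma fle_refl: "fle n a a" by (simp add: fle_def)

lemma cs_comp_ext: "cs_comp (sob n a) h g \<in> extensional {..<mm n a}"
  by (simp add: cs_comp_def sob_def compose_def)

lemma cs_comp_fp: "i < n \<Longrightarrow> cs_comp (sob n a) h g (fp n a i) = h (g (fp n a i))"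
  by (simp add: cs_comp_def sob_def compose_eq fp_props)

lemma hh_ext: "hh n a b \<in> extensional {..<mm n a}" by (simp add: hh_def)

lemma finish:
  assumes oa: "cs_obj n a" and oc: "cs_obj n c" and ob: "cs_obj n b"
    and ac: "fle n a c" and cb: "fle n c b"
  shows "zeq n a [Bwd a (iota n a) (sob n a), Fwd (sob n a) (hh n a c) (sob n c),
     Fwd (sob n c) (iota n c) c, Bwd c (iota n c) (sob n c), Fwd (sob n c) (hh n c b) (sob n b),
     Fwd (sob n b) (iota n b) b] (NF n a b) b"
proof -
  have ab: "fle n a b" using ac cb by (rule fle_trans)
  note M = iota_mor[OF oa] iota_mor[OF oc] iota_mor[OF ob] hh_mor[OF ac] hh_mor[OF cb] hh_mor[OF ab]
    sob_obj oa ob oc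
  have E2: "cs_comp (sob n a) (hh n c b) (hh n a c) = hh n a b"
    by (rule ext_sob[OF cs_comp_ext hh_ext]) (simp add: cs_comp_fp hh_props ac cb ab)
  have 1: "zeq n a ([Bwd a (iota n a) (sob n a), Fwd (sob n a) (hh n a c) (sob n c)]
     @ [Fwd (sob n c) (iota n c) c, Bwd c (iota n c) (sob n c)] @ [Fwd (sob n c) (hh n c b) (sob n b),
     Fwd (sob n b) (iota n b) b]) ([Bwd a (iota n a) (sob n a), Fwd (sob n a) (hh n a c) (sob n c)]
     @ [] @ [Fwd (sob n c) (hh n c b) (sob n b),
     Fwd (sob n b) (iota n b) b]) b"
    by (rule zeq.step[OF _ zrel.inv_left]) (use M in \<open>simp_all add: zpath_Cons_iff zpath_Nil_iff\<close>)
  have 2: "zeq n a ([Bwd a (iota n a) (sob n a)] @ [Fwd (sob n a) (hh n a c) (sob n c), Fwd (sob n c) (hh n c b) (sob n b)]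
     @ [Fwd (sob n b) (iota n b) b]) ([Bwd a (iota n a) (sob n a)] @ [Fwd (sob n a) (cs_comp (sob n a) (hh n c b) (hh n a c)) (sob n b)]
     @ [Fwd (sob n b) (iota n b) b]) b"
    by (rule zeq.step[OF _ zrel.comp]) (use M in \<open>simp_all add: zpath_Cons_iff zpath_Nil_iff\<close>)
  show ?thesis using zeq_ts[OF 1 2] by (simp add: E2 NF_def)
qed

lemma edge_fwd:
  assumes g: "cs_mor n a g c" and cb: "fle n c b" and ob: "cs_obj n b"
  shows "zeq n a (Fwd a g c # NF n c b) (NF n a b) b"
proof -
  have oa: "cs_obj n a" and oc: "cs_obj n c" using g by (auto simp: cs_mor_def)
  have ac: "fle n a c" using fle_path[of n a "[Fwd a g c]" c] g oc
    by (simp add: zpath_Cons_iff zpath_Nil_iff)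
  have ab: "fle n a b" using ac cb by (rule fle_trans)
  have gs: "\<And>i. i < n \<Longrightarrow> g (snd a i) = snd c i" using g by (simp add: cs_mor_def)
  note M = iota_mor[OF oa] iota_mor[OF oc] iota_mor[OF ob] hh_mor[OF ac] hh_mor[OF cb] hh_mor[OF ab]
    sob_obj oa ob oc g cs_comp_mor[OF iota_mor(1)[OF oa] g]
  have E1: "cs_comp (sob n a) g (iota n a) = cs_comp (sob n a) (iota n c) (hh n a c)"
    by (rule ext_sob[OF cs_comp_ext cs_comp_ext]) (simp add: cs_comp_fp hh_props ac fp_props gs)
  let ?L0 = "Fwd a g c # NF n c b"
  let ?t0 = "[Bwd c (iota n c) (sob n c), Fwd (sob n c) (hh n c b) (sob n b), Fwd (sob n b) (iota n b) b]"
  have A: "zeq n a ([] @ [Bwd a (iota n a) (sob n a), Fwd (sob n a) (iota n a) a] @ ?L0) ([] @ [] @ ?L0) b"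
    by (rule zeq.step[OF _ zrel.inv_right]) (use M in \<open>simp_all add: zpath_Cons_iff zpath_Nil_iff NF_def\<close>)
  have B: "zeq n a ([Bwd a (iota n a) (sob n a)] @ [Fwd (sob n a) (iota n a) a, Fwd a g c] @ ?t0)
      ([Bwd a (iota n a) (sob n a)] @ [Fwd (sob n a) (cs_comp (sob n a) g (iota n a)) c] @ ?t0) b"
    by (rule zeq.step[OF _ zrel.comp]) (use M in \<open>simp_all add: zpath_Cons_iff zpath_Nil_iff\<close>)
  have C: "zeq n a ([Bwd a (iota n a) (sob n a)] @ [Fwd (sob n a) (hh n a c) (sob n c), Fwd (sob n c) (iota n c) c] @ ?t0)
      ([Bwd a (iota n a) (sob n a)] @ [Fwd (sob n a) (cs_comp (sob n a) (iota n c) (hh n a c)) c] @ ?t0) b"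
    by (rule zeq.step[OF _ zrel.comp]) (use M in \<open>simp_all add: zpath_Cons_iff zpath_Nil_iff\<close>)
  have F: "zeq n a [Bwd a (iota n a) (sob n a), Fwd (sob n a) (hh n a c) (sob n c),
     Fwd (sob n c) (iota n c) c, Bwd c (iota n c) (sob n c), Fwd (sob n c) (hh n c b) (sob n b),
     Fwd (sob n b) (iota n b) b] (NF n a b) b" by (rule finish[OF oa oc ob ac cb])
  have A': "zeq n a ?L0 ([Bwd a (iota n a) (sob n a), Fwd (sob n a) (iota n a) a] @ ?L0) b"
    using zeq.sym[OF A] by simp
  have B': "zeq n a ([Bwd a (iota n a) (sob n a), Fwd (sob n a) (iota n a) a] @ ?L0)
     ([Bwd a (iota n a) (sob n a)] @ [Fwd (sob n a) (hh n a c) (sob n c), Fwd (sob n c) (iota n c) c] @ ?t0) b"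
    using zeq_ts[OF B zeq.sym[OF C]] E1 by (simp add: NF_def)
  show ?thesis using zeq_ts[OF zeq_ts[OF A' B'] F] by simp
qed

lemma edge_bwd:
  assumes g: "cs_mor n c g a" and inj: "inj_on g {..<fst c}" and cb: "fle n c b" and ob: "cs_obj n b"
  shows "zeq n a (Bwd a g c # NF n c b) (NF n a b) b"
proof -
  have oa: "cs_obj n a" and oc: "cs_obj n c" using g by (auto simp: cs_mor_def)
  have ac: "fle n a c" using fle_path[of n a "[Bwd a g c]" c] g inj oc
    by (simp add: zpath_Cons_iff zpath_Nil_iff)
  have ab: "fle n a b" using ac cb by (rule fle_trans)
  have gs: "\<And>i. i < n \<Longrightarrow> g (snd c i) = snd a i" using g by (simp add: cs_mor_def)
  note M = iota_mor[OF oa] iota_mor[OF oc] iota_mor[OF ob] hh_mor[OF ac] hh_mor[OF cb] hh_mor[OF ab]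
    sob_obj oa ob oc g inj cs_comp_mor[OF iota_mor(1)[OF oc] g]
  have E3: "cs_comp (sob n a) (cs_comp (sob n c) g (iota n c)) (hh n a c) = iota n a"
    by (rule ext_sob[OF cs_comp_ext iota_ext]) (simp add: cs_comp_fp hh_props ac fp_props gs)
  let ?L0 = "Bwd a g c # NF n c b"
  let ?Y = "cs_comp (sob n c) g (iota n c)"
  have A: "zeq n a ([] @ [Bwd a (iota n a) (sob n a), Fwd (sob n a) (iota n a) a] @ ?L0) ([] @ [] @ ?L0) b"
    by (rule zeq.step[OF _ zrel.inv_right]) (use M in \<open>simp_all add: zpath_Cons_iff zpath_Nil_iff NF_def\<close>)
  have B: "zeq n a ([Bwd a (iota n a) (sob n a)] @ [Fwd (sob n a) (hh n a c) (sob n c), Fwd (sob n c) ?Y a] @ ?L0)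
      ([Bwd a (iota n a) (sob n a)] @ [Fwd (sob n a) (cs_comp (sob n a) ?Y (hh n a c)) a] @ ?L0) b"
    by (rule zeq.step[OF _ zrel.comp]) (use M in \<open>simp_all add: zpath_Cons_iff zpath_Nil_iff NF_def\<close>)
  have C: "zeq n a ([Bwd a (iota n a) (sob n a), Fwd (sob n a) (hh n a c) (sob n c)] @ [Fwd (sob n c) (iota n c) c, Fwd c g a] @ ?L0)
      ([Bwd a (iota n a) (sob n a), Fwd (sob n a) (hh n a c) (sob n c)] @ [Fwd (sob n c) ?Y a] @ ?L0) b"
    by (rule zeq.step[OF _ zrel.comp]) (use M in \<open>simp_all add: zpath_Cons_iff zpath_Nil_iff NF_def\<close>)
  have D: "zeq n a ([Bwd a (iota n a) (sob n a), Fwd (sob n a) (hh n a c) (sob n c), Fwd (sob n c) (iota n c) c] @ [Fwd c g a, Bwd a g c] @ NF n c b)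
      ([Bwd a (iota n a) (sob n a), Fwd (sob n a) (hh n a c) (sob n c), Fwd (sob n c) (iota n c) c] @ [] @ NF n c b) b"
    by (rule zeq.step[OF _ zrel.inv_left]) (use M in \<open>simp_all add: zpath_Cons_iff zpath_Nil_iff NF_def\<close>)
  have F: "zeq n a [Bwd a (iota n a) (sob n a), Fwd (sob n a) (hh n a c) (sob n c),
     Fwd (sob n c) (iota n c) c, Bwd c (iota n c) (sob n c), Fwd (sob n c) (hh n c b) (sob n b),
     Fwd (sob n b) (iota n b) b] (NF n a b) b" by (rule finish[OF oa oc ob ac cb])
  have A': "zeq n a ?L0 ([Bwd a (iota n a) (sob n a), Fwd (sob n a) (iota n a) a] @ ?L0) b"
    using zeq.sym[OF A] by simp
  have B': "zeq n a ([Bwd a (iota n a) (sob n a), Fwd (sob n a) (iota n a) a] @ ?L0)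
      ([Bwd a (iota n a) (sob n a)] @ [Fwd (sob n a) (hh n a c) (sob n c), Fwd (sob n c) ?Y a] @ ?L0) b"
    using zeq.sym[OF B] E3 by simp
  have C': "zeq n a ([Bwd a (iota n a) (sob n a)] @ [Fwd (sob n a) (hh n a c) (sob n c), Fwd (sob n c) ?Y a] @ ?L0)
     ([Bwd a (iota n a) (sob n a), Fwd (sob n a) (hh n a c) (sob n c)] @ [Fwd (sob n c) (iota n c) c, Fwd c g a] @ ?L0) b"
    using zeq.sym[OF C] by simp
  have D': "zeq n a ([Bwd a (iota n a) (sob n a), Fwd (sob n a) (hh n a c) (sob n c)] @ [Fwd (sob n c) (iota n c) c, Fwd c g a] @ ?L0)
     (NF n a b) b"
    using zeq_ts[OF D F] by (simp add: NF_def)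
  show ?thesis using zeq_ts[OF A' zeq_ts[OF B' zeq_ts[OF C' D']]] by simp
qed

lemma nf_nil: "cs_obj n a \<Longrightarrow> zeq n a [] (NF n a a) a"
proof -
  assume oa: "cs_obj n a"
  note M = iota_mor[OF oa] sob_obj oa cs_id_mor[OF sob_obj]
  have E: "hh n a a = cs_id (sob n a)"
    by (rule ext_sob[OF hh_ext]) (auto simp: cs_id_def sob_def hh_props fle_refl fp_props)
  have 1: "zeq n a ([Bwd a (iota n a) (sob n a)] @ [Fwd (sob n a) (cs_id (sob n a)) (sob n a)] @ [Fwd (sob n a) (iota n a) a])
    ([Bwd a (iota n a) (sob n a)] @ [] @ [Fwd (sob n a) (iota n a) a]) a"
    by (rule zeq.step[OF _ zrel.ident]) (use M in \<open>simp_all add: zpath_Cons_iff zpath_Nil_iff\<close>)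
  have 2: "zeq n a ([] @ [Bwd a (iota n a) (sob n a), Fwd (sob n a) (iota n a) a] @ []) ([] @ [] @ []) a"
    by (rule zeq.step[OF _ zrel.inv_right]) (use M in \<open>simp_all add: zpath_Cons_iff zpath_Nil_iff\<close>)
  show ?thesis using zeq.sym[OF zeq_ts[OF 1 2]] E by (simp add: NF_def)
qed

lemma to_nf: "zpath n a xs b \<Longrightarrow> zeq n a xs (NF n a b) b"
proof (induction rule: zpath.induct)
  case (nil a) then show ?case by (rule nf_nil)
next
  case (cons e a es b)
  have pb: "fle n (edge_tgt e) b" "cs_obj n b" "cs_obj n (edge_tgt e)" using fle_path[OF cons.hyps(3)] by auto
  have "zeq n a ([e] @ es @ []) ([e] @ NF n (edge_tgt e) b @ []) b"
    by (rule zeq_ctx[OF cons.IH]) (use cons pb in \<open>simp_all add: zpath_Cons_iff zpath_Nil_iff\<close>)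
  hence 1: "zeq n a (e # es) (e # NF n (edge_tgt e) b) b" by simp
  have "zeq n a (e # NF n (edge_tgt e) b) (NF n a b) b"
  proof (cases e)
    case (Fwd x g y)
    have "cs_mor n a g y" "edge_tgt e = y" "x = a" using cons.hyps(1,2) Fwd by auto
    then show ?thesis using edge_fwd[of n a g y b] pb Fwd by simp
  next
    case (Bwd y g x)
    have "cs_mor n x g a" "inj_on g {..<fst x}" "edge_tgt e = x" "y = a" using cons.hyps(1,2) Bwd by auto
    then show ?thesis using edge_bwd[of n x g a b] pb Bwd by simp
  qed
  then show ?case by (rule zeq.trans[OF 1])
qed

theorem mainTheorem18:
  fixes n :: nat
  shows "localization_thin n"
  unfolding localization_thin_def
  by (meson to_nf zeq.sym zeq.trans)

end
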